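(* Let $\mathcal G$ be an étale groupoid, $Z$ a locally compact Hausdorff proper $\mathcal G$-compact $\mathcal G$-space, $K_1,K_2$ compact subsets of $\mathcal G$, and $\phi_1:Z\to P_{K_1}(\mathcal G)$, $\phi_2:Z\to P_{K_2}(\mathcal G)$ $\mathcal G$-equivariant continuous maps. Then there exists a compact subset $K\supseteq K_1\cup K_2$ of $\mathcal G$ such that $\iota_{K_1,K}\circ\phi_1$ and $\iota_{K_2,K}\circ\phi_2$ are $\mathcal G$-equivariantly homotopic maps $Z\to P_K(\mathcal G)$.
   Context: Étale groupoids are locally compact Hausdorff with range map a local homeomorphism. $P(\mathcal G)$ is the space of positive Radon measures $\mu$ on $\mathcal G$ with $\mu(\mathcal G)=1$ and support contained in a single fibre $r^{-1}(x)$, with the weak-$*$ topology from $C_c(\mathcal G,\mathbb R)$ and $\mathcal G$-action by left translation, $\gamma(\sum c_i\delta_{\gamma_i})=\sum c_i\delta_{\gamma\gamma_i}$. For compact $K\subseteq\mathcal G$, $P_K(\mathcal G)$ is the subspace of finitely supported $\mu\in P(\mathcal G)$ whose support $\delta$ satisfies $r(\gamma_1)=r(\gamma_2)$ and $\gamma_1^{-1}\gamma_2\in K$ for all $\gamma_1,\gamma_2\in\delta$ (the geometric realization of the Rips complex). For $K'\subseteq K$, $\iota_{K',K}:P_{K'}(\mathcal G)\hookrightarrow P_K(\mathcal G)$ is the inclusion. A $\mathcal G$-space is $\mathcal G$-compact if it is $\mathcal GC$ for some compact $C$; a $\mathcal G$-homotopy is a $\mathcal G$-equivariant continuous map $[0,1]\times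 Z\to P_K(\mathcal G)$. *)

theory Defs
  imports "HOL-Analysis.Analysis"
begin

text \<open>An (abstract) topological groupoid: the arrow space is the topological space TG
  (its carrier topspace TG is the set of arrows), with range r, source s, partial
  multiplication gmul (defined on pairs g h with s g = r h) and inverse ginv.\<close>

definition composable :: "'g topology \<Rightarrow> ('g \<Rightarrow> 'g) \<Rightarrow> ('g \<Rightarrow> 'g) \<Rightarrow> ('g \<times> 'g) set" where
  "composable TG r s = {(g, h). g \<in> topspace TG \<and> h \<in> topspace TG \<and> s g = r h}"

definition groupoid_axioms ::
  "'g topology \<Rightarrow> ('g \<Rightarrow> 'g) \<Rightarrow> ('g \<Rightarrow> 'g) \<Rightarrow> ('g \<Rightarrow> 'g \<Rightarrow> 'g) \<Rightarrow> ('g \<Rightarrow> 'g) \<Rightarrow> bool" where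
  "groupoid_axioms TG r s gmul ginv \<longleftrightarrow>
     (\<forall>g\<in>topspace TG. r g \<in> topspace TG \<and> s g \<in> topspace TG \<and> ginv g \<in> topspace TG) \<and>
     (\<forall>g\<in>topspace TG. r (r g) = r g \<and> s (r g) = r g \<and> r (s g) = s g \<and> s (s g) = s g) \<and>
     (\<forall>g\<in>topspace TG. \<forall>h\<in>topspace TG. s g = r h \<longrightarrow>
         gmul g h \<in> topspace TG \<and> r (gmul g h) = r g \<and> s (gmul g h) = s h) \<and>
     (\<forall>g\<in>topspace TG. \<forall>h\<in>topspace TG. \<forall>k\<in>topspace TG. s g = r h \<longrightarrow> s h = r k \<longrightarrow>
         gmul (gmul g h) k = gmul g (gmul h k)) \<and>
     (\<forall>g\<in>topspace TG. gmul (r g) g = g \<and> gmul g (s g) = g) \<and>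
     (\<forall>g\<in>topspace TG. r (ginv g) = s g \<and> s (ginv g) = r g \<and>
         gmul g (ginv g) = r g \<and> gmul (ginv g) g = s g)"

definition etale_groupoid ::
  "'g topology \<Rightarrow> ('g \<Rightarrow> 'g) \<Rightarrow> ('g \<Rightarrow> 'g) \<Rightarrow> ('g \<Rightarrow> 'g \<Rightarrow> 'g) \<Rightarrow> ('g \<Rightarrow> 'g) \<Rightarrow> bool" where
  "etale_groupoid TG r s gmul ginv \<longleftrightarrow>
     groupoid_axioms TG r s gmul ginv \<and>
     Hausdorff_space TG \<and> locally_compact_space TG \<and>
     continuous_map TG TG ginv \<and>
     continuous_map (subtopology (prod_topology TG TG) (composable TG r s)) TG (\<lambda>(g, h). gmul g h) \<and>
     continuous_map TG TG r \<and> continuous_map TG TG s \<and>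
     (\<forall>g\<in>topspace TG. \<exists>V. openin TG V \<and> g \<in> V \<and> openin TG (r ` V) \<and>
         homeomorphic_map (subtopology TG V) (subtopology TG (r ` V)) r)"

definition action_domain ::
  "'g topology \<Rightarrow> ('g \<Rightarrow> 'g) \<Rightarrow> 'z topology \<Rightarrow> ('z \<Rightarrow> 'g) \<Rightarrow> ('g \<times> 'z) set" where
  "action_domain TG s TZ p = {(g, z). g \<in> topspace TG \<and> z \<in> topspace TZ \<and> s g = p z}"

definition G_space ::
  "'g topology \<Rightarrow> ('g \<Rightarrow> 'g) \<Rightarrow> ('g \<Rightarrow> 'g) \<Rightarrow> ('g \<Rightarrow> 'g \<Rightarrow> 'g) \<Rightarrow>
   'z topology \<Rightarrow> ('z \<Rightarrow> 'g) \<Rightarrow> ('g \<Rightarrow> 'z \<Rightarrow> 'z) \<Rightarrow> bool" where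
  "G_space TG r s gmul TZ p act \<longleftrightarrow>
     continuous_map TZ (subtopology TG (r ` topspace TG)) p \<and>
     continuous_map (subtopology (prod_topology TG TZ) (action_domain TG s TZ p)) TZ
        (\<lambda>(g, z). act g z) \<and>
     (\<forall>(g, z)\<in>action_domain TG s TZ p. act g z \<in> topspace TZ \<and> p (act g z) = r g) \<and>
     (\<forall>z\<in>topspace TZ. act (p z) z = z) \<and>
     (\<forall>g\<in>topspace TG. \<forall>h\<in>topspace TG. \<forall>z\<in>topspace TZ. s g = r h \<longrightarrow> s h = p z \<longrightarrow>
         act g (act h z) = act (gmul g h) z)"

definition proper_action ::
  "'g topology \<Rightarrow> ('g \<Rightarrow> 'g) \<Rightarrow> 'z topology \<Rightarrow> ('z \<Rightarrow> 'g) \<Rightarrow> ('g \<Rightarrow> 'z \<Rightarrow> 'z) \<Rightarrow> bool" where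
  "proper_action TG s TZ p act \<longleftrightarrow>
     proper_map (subtopology (prod_topology TG TZ) (action_domain TG s TZ p))
                (prod_topology TZ TZ) (\<lambda>(g, z). (act g z, z))"

definition G_compact ::
  "'g topology \<Rightarrow> ('g \<Rightarrow> 'g) \<Rightarrow> 'z topology \<Rightarrow> ('z \<Rightarrow> 'g) \<Rightarrow> ('g \<Rightarrow> 'z \<Rightarrow> 'z) \<Rightarrow> bool" where
  "G_compact TG s TZ p act \<longleftrightarrow>
     (\<exists>C. compactin TZ C \<and>
          topspace TZ = {act g z | g z. z \<in> C \<and> (g, z) \<in> action_domain TG s TZ p})"

text \<open>Finitely supported probability measures are represented by their mass function
  'g \<Rightarrow> real.  P_K(G): support in one range fibre with \<gamma>1\<inverse>\<gamma>2 \<in> K.\<close>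

definition msupp :: "('g \<Rightarrow> real) \<Rightarrow> 'g set" where
  "msupp \<mu> = {\<gamma>. \<mu> \<gamma> \<noteq> 0}"

definition PK ::
  "'g topology \<Rightarrow> ('g \<Rightarrow> 'g) \<Rightarrow> ('g \<Rightarrow> 'g \<Rightarrow> 'g) \<Rightarrow> ('g \<Rightarrow> 'g) \<Rightarrow> 'g set \<Rightarrow> ('g \<Rightarrow> real) set" where
  "PK TG r gmul ginv K =
     {\<mu>. finite (msupp \<mu>) \<and> msupp \<mu> \<subseteq> topspace TG \<and> (\<forall>\<gamma>. 0 \<le> \<mu> \<gamma>) \<and>
         sum \<mu> (msupp \<mu>) = 1 \<and>
         (\<forall>\<gamma>1\<in>msupp \<mu>. \<forall>\<gamma>2\<in>msupp \<mu>. r \<gamma>1 = r \<gamma>2 \<and> gmul (ginv \<gamma>1) \<gamma>2 \<in> K)}"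

definition Cc :: "'g topology \<Rightarrow> ('g \<Rightarrow> real) set" where
  "Cc TG = {f. continuous_map TG euclideanreal f \<and>
              compactin TG (TG closure_of {x \<in> topspace TG. f x \<noteq> 0}) \<and>
              (\<forall>x. x \<notin> topspace TG \<longrightarrow> f x = 0)}"

definition pairing :: "('g \<Rightarrow> real) \<Rightarrow> ('g \<Rightarrow> real) \<Rightarrow> real" where
  "pairing \<mu> f = (\<Sum>\<gamma>\<in>msupp \<mu>. \<mu> \<gamma> * f \<gamma>)"

text \<open>Weak-* topology (initial topology of \<mu> \<mapsto> \<integral> f d\<mu>, f \<in> C_c(G,R)) on P_K(G).\<close>

definition PK_top ::
  "'g topology \<Rightarrow> ('g \<Rightarrow> 'g) \<Rightarrow> ('g \<Rightarrow> 'g \<Rightarrow> 'g) \<Rightarrow> ('g \<Rightarrow> 'g) \<Rightarrow> 'g set \<Rightarrow> ('g \<Rightarrow> real) topology" where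
  "PK_top TG r gmul ginv K =
     pullback_topology (PK TG r gmul ginv K)
       (\<lambda>\<mu>. restrict (pairing \<mu>) (Cc TG))
       (product_topology (\<lambda>_. euclideanreal) (Cc TG))"

definition translate ::
  "'g topology \<Rightarrow> ('g \<Rightarrow> 'g) \<Rightarrow> ('g \<Rightarrow> 'g \<Rightarrow> 'g) \<Rightarrow> ('g \<Rightarrow> 'g) \<Rightarrow> 'g \<Rightarrow> ('g \<Rightarrow> real) \<Rightarrow> ('g \<Rightarrow> real)" where
  "translate TG r gmul ginv \<gamma> \<mu> =
     (\<lambda>\<eta>. if \<eta> \<in> topspace TG \<and> r \<eta> = r \<gamma> then \<mu> (gmul (ginv \<gamma>) \<eta>) else 0)"

definition iota :: "('g \<Rightarrow> real) \<Rightarrow> ('g \<Rightarrow> real)" where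
  "iota \<mu> = \<mu>"

end

theory Submission
  imports Defs
begin

locale grp =
  fixes TG :: "'g topology" and r s :: "'g \<Rightarrow> 'g" and gmul :: "'g \<Rightarrow> 'g \<Rightarrow> 'g" and ginv :: "'g \<Rightarrow> 'g"
  assumes ax: "groupoid_axioms TG r s gmul ginv"
begin

lemma r_in[simp]: "g \<in> topspace TG \<Longrightarrow> r g \<in> topspace TG"
  and s_in[simp]: "g \<in> topspace TG \<Longrightarrow> s g \<in> topspace TG"
  and inv_in[simp]: "g \<in> topspace TG \<Longrightarrow> ginv g \<in> topspace TG"
  and rr[simp]: "g \<in> topspace TG \<Longrightarrow> r (r g) = r g"
  and sr[simp]: "g \<in> topspace TG \<Longrightarrow> s (r g) = r g"
  and rs[simp]: "g \<in> topspace TG \<Longrightarrow> r (s g) = s g"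
  and ss[simp]: "g \<in> topspace TG \<Longrightarrow> s (s g) = s g"
  and lunit[simp]: "g \<in> topspace TG \<Longrightarrow> gmul (r g) g = g"
  and runit[simp]: "g \<in> topspace TG \<Longrightarrow> gmul g (s g) = g"
  and r_inv[simp]: "g \<in> topspace TG \<Longrightarrow> r (ginv g) = s g"
  and s_inv[simp]: "g \<in> topspace TG \<Longrightarrow> s (ginv g) = r g"
  and mul_inv[simp]: "g \<in> topspace TG \<Longrightarrow> gmul g (ginv g) = r g"
  and inv_mul[simp]: "g \<in> topspace TG \<Longrightarrow> gmul (ginv g) g = s g"
  using ax unfolding groupoid_axioms_def by blast+

lemma mul_in[simp]: "g \<in> topspace TG \<Longrightarrow> h \<in> topspace TG \<Longrightarrow> s g = r h \<Longrightarrow> gmul g h \<in> topspace TG"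
  and r_mul[simp]: "g \<in> topspace TG \<Longrightarrow> h \<in> topspace TG \<Longrightarrow> s g = r h \<Longrightarrow> r (gmul g h) = r g"
  and s_mul[simp]: "g \<in> topspace TG \<Longrightarrow> h \<in> topspace TG \<Longrightarrow> s g = r h \<Longrightarrow> s (gmul g h) = s h"
  using ax unfolding groupoid_axioms_def by blast+

lemma assoc: "g \<in> topspace TG \<Longrightarrow> h \<in> topspace TG \<Longrightarrow> k \<in> topspace TG \<Longrightarrow> s g = r h \<Longrightarrow> s h = r k
   \<Longrightarrow> gmul (gmul g h) k = gmul g (gmul h k)"
  using ax unfolding groupoid_axioms_def by blast

lemma inv_unique:
  assumes x: "x \<in> topspace TG" and y: "y \<in> topspace TG" and sxy: "s x = r y" and e: "gmul x y = r x"
  shows "ginv x = y"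
proof -
  have "ginv x = gmul (ginv x) (r x)" using runit[of "ginv x"] x by simp
  also have "\<dots> = gmul (ginv x) (gmul x y)" using e by simp
  also have "\<dots> = gmul (gmul (ginv x) x) y" using assoc[of "ginv x" x y] x y sxy by simp
  also have "\<dots> = y" using x y sxy by simp
  finally show ?thesis .
qed

lemma inv_inv[simp]: "g \<in> topspace TG \<Longrightarrow> ginv (ginv g) = g"
  by (rule inv_unique) auto

lemma inv_prod:
  assumes a: "a \<in> topspace TG" and b: "b \<in> topspace TG" and ab: "s a = r b"
  shows "ginv (gmul a b) = gmul (ginv b) (ginv a)"
proof (rule inv_unique)
  show "gmul a b \<in> topspace TG" "gmul (ginv b) (ginv a) \<in> topspace TG"
    "s (gmul a b) = r (gmul (ginv b) (ginv a))" using a b ab by auto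
  have "gmul (gmul a b) (gmul (ginv b) (ginv a)) = gmul a (gmul b (gmul (ginv b) (ginv a)))"
    using assoc[of a b "gmul (ginv b) (ginv a)"] a b ab by auto
  also have "\<dots> = gmul a (gmul (gmul b (ginv b)) (ginv a))"
    using assoc[of b "ginv b" "ginv a"] a b ab by auto
  also have "\<dots> = gmul a (ginv a)" using a b ab lunit[of "ginv a"] by simp
  also have "\<dots> = r (gmul a b)" using a b ab by simp
  finally show "gmul (gmul a b) (gmul (ginv b) (ginv a)) = r (gmul a b)" .
qed

lemma cancel:
  assumes g: "g \<in> topspace TG" and e: "\<eta> \<in> topspace TG" and re: "r \<eta> = r g"
  shows "gmul g (gmul (ginv g) \<eta>) = \<eta>"
proof -
  have "gmul g (gmul (ginv g) \<eta>) = gmul (gmul g (ginv g)) \<eta>"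
    using assoc[of g "ginv g" \<eta>] g e re by auto
  then show ?thesis using g e re lunit[of \<eta>] by simp
qed

lemma translate_key:
  assumes g: "g \<in> topspace TG" and e1: "\<eta>1 \<in> topspace TG" and e2: "\<eta>2 \<in> topspace TG"
    and r1: "r \<eta>1 = r g" and r2: "r \<eta>2 = r g"
  shows "gmul (ginv (gmul (ginv g) \<eta>1)) (gmul (ginv g) \<eta>2) = gmul (ginv \<eta>1) \<eta>2"
proof -
  have "ginv (gmul (ginv g) \<eta>1) = gmul (ginv \<eta>1) g"
    using inv_prod[of "ginv g" \<eta>1] g e1 r1 by simp
  moreover have "gmul (gmul (ginv \<eta>1) g) (gmul (ginv g) \<eta>2) = gmul (ginv \<eta>1) (gmul g (gmul (ginv g) \<eta>2))"
    using assoc[of "ginv \<eta>1" g "gmul (ginv g) \<eta>2"] g e1 e2 r1 r2 by simp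
  ultimately show ?thesis using cancel[OF g e2 r2] by simp
qed

end

definition prodset :: "('g \<Rightarrow> 'g \<Rightarrow> 'g) \<Rightarrow> ('g \<times> 'g) set \<Rightarrow> 'g set \<Rightarrow> 'g set \<Rightarrow> 'g set" where
  "prodset gmul CP A B = (\<lambda>(a, b). gmul a b) ` ((A \<times> B) \<inter> CP)"

lemma prodset_compact:
  assumes et: "etale_groupoid TG r s gmul ginv" and A: "compactin TG A" and B: "compactin TG B"
  shows "compactin TG (prodset gmul (composable TG r s) A B)"
proof -
  have H: "Hausdorff_space TG" and cm: "continuous_map (subtopology (prod_topology TG TG) (composable TG r s)) TG (\<lambda>(g, h). gmul g h)"
    and cr: "continuous_map TG TG r" and cs: "continuous_map TG TG s"
    using et unfolding etale_groupoid_def by auto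
  have eq: "composable TG r s = {x \<in> topspace (prod_topology TG TG). (s \<circ> fst) x = (r \<circ> snd) x}"
    by (auto simp: composable_def)
  have cl: "closedin (prod_topology TG TG) (composable TG r s)"
    unfolding eq
    by (rule closedin_continuous_maps_eq[OF H]) (use continuous_map_compose[OF continuous_map_fst cs] continuous_map_compose[OF continuous_map_snd cr] in \<open>simp_all add: o_def\<close>)
  have "compactin (prod_topology TG TG) (A \<times> B)" using A B by (simp add: compactin_Times)
  then have "compactin (prod_topology TG TG) (composable TG r s \<inter> (A \<times> B))"
    using closed_Int_compactin[OF cl] by blast
  then have "compactin (subtopology (prod_topology TG TG) (composable TG r s)) ((A \<times> B) \<inter> composable TG r s)"
    by (simp add: compactin_subtopology Int_commute)
  from image_compactin[OF this cm] show ?thesis unfolding prodset_def .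
qed

lemma bump:
  assumes lc: "locally_compact_space X" and H: "Hausdorff_space X" and x: "x \<in> topspace X"
  obtains f where "f \<in> Cc X" "f x > 0" "\<forall>y. f y \<ge> 0"
proof -
  obtain U K where U: "openin X U" and K: "compactin X K" and Kc: "closedin X K" and xU: "x \<in> U" and UK: "U \<subseteq> K"
    using iffD1[OF locally_compact_space_compact_closedin[OF disjI1[OF H]] lc] x by blast
  have cr: "completely_regular_space X"
    by (rule locally_compact_regular_imp_completely_regular_space[OF lc]) (simp add: H)
  obtain h where h: "continuous_map X (top_of_set {0..1::real}) h" and h0: "h x = 0" and h1: "h ` (topspace X - U) \<subseteq> {1}"
  proof -
    have "closedin X (topspace X - U)" using U by blast
    moreover have "x \<in> topspace X - (topspace X - U)" using x xU by blast
    ultimately have "\<exists>h. continuous_map X (top_of_set {0..1::real}) h \<and> h x = 0 \<and> h ` (topspace X - U) \<subseteq> {1}"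
      by (rule cr[unfolded completely_regular_space_def, rule_format, OF conjI])
    then show ?thesis using that by blast
  qed
  define f where "f y = (if y \<in> topspace X then 1 - h y else 0)" for y
  have hr: "continuous_map X euclideanreal h" using h continuous_map_into_fulltopology by blast
  have hb: "y \<in> topspace X \<Longrightarrow> h y \<in> {0..1}" for y using continuous_map_image_subset_topspace[OF h] by auto
  have fc: "continuous_map X euclideanreal f"
  proof (rule continuous_map_eq[of _ _ "\<lambda>y. 1 - h y"])
    show "continuous_map X euclideanreal (\<lambda>y. 1 - h y)"
      by (intro continuous_map_diff hr) simp
  qed (simp add: f_def)
  have sub: "{y \<in> topspace X. f y \<noteq> 0} \<subseteq> K"
  proof
    fix y assume y: "y \<in> {y \<in> topspace X. f y \<noteq> 0}"
    have "y \<in> U"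
    proof (rule ccontr)
      assume "y \<notin> U"
      then have "h y = 1" using h1 y by auto
      then show False using y unfolding f_def by auto
    qed
    then show "y \<in> K" using UK by blast
  qed
  have "X closure_of {y \<in> topspace X. f y \<noteq> 0} \<subseteq> K"
    by (rule closure_of_minimal[OF sub Kc])
  then have cpt: "compactin X (X closure_of {y \<in> topspace X. f y \<noteq> 0})"
    using closed_compactin[OF K _ closedin_closure_of] by blast
  have fout: "\<forall>y. y \<notin> topspace X \<longrightarrow> f y = 0" unfolding f_def by simp
  have "f \<in> Cc X" unfolding Cc_def using fc cpt fout by blast
  moreover have "f x > 0" using x h0 by (simp add: f_def)
  moreover have "\<forall>y. f y \<ge> 0" using hb by (simp add: f_def)
  ultimately show ?thesis using that by blast
qed

lemma PK_D:
  assumes "\<mu> \<in> PK TG r gmul ginv K"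
  shows "finite (msupp \<mu>)" "msupp \<mu> \<subseteq> topspace TG" "\<And>\<gamma>. 0 \<le> \<mu> \<gamma>" "sum \<mu> (msupp \<mu>) = 1"
    "\<And>\<gamma>1 \<gamma>2. \<gamma>1 \<in> msupp \<mu> \<Longrightarrow> \<gamma>2 \<in> msupp \<mu> \<Longrightarrow> r \<gamma>1 = r \<gamma>2"
    "\<And>\<gamma>1 \<gamma>2. \<gamma>1 \<in> msupp \<mu> \<Longrightarrow> \<gamma>2 \<in> msupp \<mu> \<Longrightarrow> gmul (ginv \<gamma>1) \<gamma>2 \<in> K"
  using assms unfolding PK_def mem_Collect_eq by blast+

lemma PK_of_cont:
  assumes "continuous_map TZ (PK_top TG r gmul ginv K) \<phi>" "z \<in> topspace TZ"
  shows "\<phi> z \<in> PK TG r gmul ginv K"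
  using assms unfolding continuous_map_def PK_top_def topspace_pullback_topology by blast

lemma pairing_cont:
  assumes c: "continuous_map TZ (PK_top TG r gmul ginv K) \<phi>" and f: "f \<in> Cc TG"
  shows "continuous_map TZ euclideanreal (\<lambda>z. pairing (\<phi> z) f)"
proof -
  have "continuous_map (PK_top TG r gmul ginv K) euclideanreal ((\<lambda>x. x f) \<circ> (\<lambda>\<mu>. restrict (pairing \<mu>) (Cc TG)))"
    unfolding PK_top_def
    using continuous_map_pullback continuous_map_product_projection[OF f, of "\<lambda>_. euclideanreal"] by blast
  from continuous_map_compose[OF c this] show ?thesis by (simp add: o_def f)
qed

lemma hit:
  assumes lc: "locally_compact_space TG" and H: "Hausdorff_space TG"
    and c: "continuous_map TZ (PK_top TG r gmul ginv K) \<phi>" and C: "compactin TZ C"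
  shows "\<exists>L. compactin TG L \<and> (\<forall>z\<in>C. msupp (\<phi> z) \<inter> L \<noteq> {})"
proof -
  define N where "N f = {z \<in> topspace TZ. pairing (\<phi> z) f \<in> - {0}}" for f
  define S where "S f = TG closure_of {x \<in> topspace TG. f x \<noteq> (0::real)}" for f
  have openN: "openin TZ (N f)" if "f \<in> Cc TG" for f
    unfolding N_def by (rule openin_continuous_map_preimage[OF pairing_cont[OF c that]]) auto
  have cover: "C \<subseteq> \<Union> (N ` Cc TG)"
  proof
    fix z assume zC: "z \<in> C"
    then have z: "z \<in> topspace TZ" using compactin_subset_topspace[OF C] by blast
    have \<mu>: "\<phi> z \<in> PK TG r gmul ginv K" by (rule PK_of_cont[OF c z])
    then have fin: "finite (msupp (\<phi> z))" and sup: "msupp (\<phi> z) \<subseteq> topspace TG"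
      and nn: "\<forall>\<gamma>. 0 \<le> \<phi> z \<gamma>" and s1: "sum (\<phi> z) (msupp (\<phi> z)) = 1" by (auto simp: PK_def)
    have "msupp (\<phi> z) \<noteq> {}" using s1 by auto
    then obtain \<gamma>0 where g0: "\<gamma>0 \<in> msupp (\<phi> z)" by blast
    obtain f where f: "f \<in> Cc TG" "f \<gamma>0 > 0" "\<forall>y. f y \<ge> 0"
      using bump[OF lc H] g0 sup by blast
    have pos: "\<phi> z \<gamma>0 > 0" using g0 nn by (metis msupp_def mem_Collect_eq order_le_less)
    have "\<phi> z \<gamma>0 * f \<gamma>0 \<le> pairing (\<phi> z) f"
      unfolding pairing_def
      by (rule member_le_sum[OF g0 _ fin]) (use nn f in auto)
    moreover have "\<phi> z \<gamma>0 * f \<gamma>0 > 0" using pos f by simp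
    ultimately have "z \<in> N f" using z by (auto simp: N_def)
    then show "z \<in> \<Union> (N ` Cc TG)" using f by blast
  qed
  obtain F where F: "finite F" "F \<subseteq> N ` Cc TG" "C \<subseteq> \<Union>F"
    using C cover openN unfolding compactin_def
    by (metis (no_types, lifting) imageE)
  obtain F' where F': "F' \<subseteq> Cc TG" "finite F'" "F = N ` F'"
    using finite_subset_image[OF F(1,2)] by blast
  have cL: "compactin TG (\<Union> (S ` F'))"
    by (rule compactin_Union) (use F' in \<open>auto simp: S_def Cc_def\<close>)
  have "\<forall>z\<in>C. msupp (\<phi> z) \<inter> \<Union> (S ` F') \<noteq> {}"
  proof
    fix z assume zC: "z \<in> C"
    then obtain f where f: "f \<in> F'" and zN: "z \<in> N f" using F F' by blast
    have z: "z \<in> topspace TZ" using zN by (simp add: N_def)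
    have sup: "msupp (\<phi> z) \<subseteq> topspace TG" using PK_of_cont[OF c z] by (simp add: PK_def)
    have "pairing (\<phi> z) f \<noteq> 0" using zN by (simp add: N_def)
    then obtain \<gamma> where g: "\<gamma> \<in> msupp (\<phi> z)" "\<phi> z \<gamma> * f \<gamma> \<noteq> 0"
      unfolding pairing_def by (meson sum.neutral)
    then have "\<gamma> \<in> {x \<in> topspace TG. f x \<noteq> 0}" using sup by auto
    then have "\<gamma> \<in> S f" unfolding S_def using closure_of_subset[of "{x \<in> topspace TG. f x \<noteq> 0}" TG] by blast
    then show "msupp (\<phi> z) \<inter> \<Union> (S ` F') \<noteq> {}" using g f by blast
  qed
  then show ?thesis using cL by blast
qed

theorem proposition3p29:
  fixes TG :: "'g topology" and r s ginv :: "'g \<Rightarrow> 'g" and gmul :: "'g \<Rightarrow> 'g \<Rightarrow> 'g"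
    and TZ :: "'z topology" and p :: "'z \<Rightarrow> 'g" and act :: "'g \<Rightarrow> 'z \<Rightarrow> 'z"
    and K1 K2 :: "'g set" and \<phi>1 \<phi>2 :: "'z \<Rightarrow> ('g \<Rightarrow> real)"
  assumes "etale_groupoid TG r s gmul ginv"
    and "G_space TG r s gmul TZ p act"
    and "locally_compact_space TZ" and "Hausdorff_space TZ"
    and "proper_action TG s TZ p act"
    and "G_compact TG s TZ p act"
    and "compactin TG K1" and "compactin TG K2"
    and "continuous_map TZ (PK_top TG r gmul ginv K1) \<phi>1"
    and "\<forall>(g, z)\<in>action_domain TG s TZ p. \<phi>1 (act g z) = translate TG r gmul ginv g (\<phi>1 z)"
    and "continuous_map TZ (PK_top TG r gmul ginv K2) \<phi>2"
    and "\<forall>(g, z)\<in>action_domain TG s TZ p. \<phi>2 (act g z) = translate TG r gmul ginv g (\<phi>2 z)"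
  shows "\<exists>K. compactin TG K \<and> K1 \<union> K2 \<subseteq> K \<and>
           (\<exists>H :: real \<Rightarrow> 'z \<Rightarrow> ('g \<Rightarrow> real).
              continuous_map (prod_topology (top_of_set {0..1}) TZ) (PK_top TG r gmul ginv K)
                 (\<lambda>(t, z). H t z) \<and>
              (\<forall>t\<in>{0..1}. \<forall>(g, z)\<in>action_domain TG s TZ p.
                 H t (act g z) = translate TG r gmul ginv g (H t z)) \<and>
              (\<forall>z\<in>topspace TZ. H 0 z = iota (\<phi>1 z) \<and> H 1 z = iota (\<phi>2 z)))"
proof -
  note et = assms(1)
  interpret grp TG r s gmul ginv using et by unfold_locales (simp add: etale_groupoid_def)
  have lc: "locally_compact_space TG" and HG: "Hausdorff_space TG" and cinv: "continuous_map TG TG ginv"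
    using et by (auto simp: etale_groupoid_def)
  note c1 = assms(9) and c2 = assms(11) and eq1 = assms(10) and eq2 = assms(12)
  obtain C where C: "compactin TZ C"
    and CZ: "topspace TZ = {act g z | g z. z \<in> C \<and> (g, z) \<in> action_domain TG s TZ p}"
    using assms(6) unfolding G_compact_def by blast
  obtain L1 where L1: "compactin TG L1" "\<forall>z\<in>C. msupp (\<phi>1 z) \<inter> L1 \<noteq> {}"
    using hit[OF lc HG c1 C] by blast
  obtain L2 where L2: "compactin TG L2" "\<forall>z\<in>C. msupp (\<phi>2 z) \<inter> L2 \<noteq> {}"
    using hit[OF lc HG c2 C] by blast
  define CP where "CP = composable TG r s"
  define A where "A = prodset gmul CP L1 K1 \<union> prodset gmul CP L2 K2"
  define K where "K = K1 \<union> K2 \<union> prodset gmul CP (ginv ` A) A"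
  have cA: "compactin TG A" unfolding A_def CP_def
    using prodset_compact[OF et L1(1) assms(7)] prodset_compact[OF et L2(1) assms(8)] by (simp add: compactin_Un)
  have cK: "compactin TG K" unfolding K_def
    using prodset_compact[OF et image_compactin[OF cA cinv] cA] assms(7,8) unfolding CP_def by (simp add: compactin_Un)
  have K1G: "K1 \<subseteq> topspace TG" and K2G: "K2 \<subseteq> topspace TG" and LG: "L1 \<subseteq> topspace TG" "L2 \<subseteq> topspace TG"
    using assms(7,8) L1 L2 compactin_subset_topspace by blast+
  have suppA: "msupp \<mu> \<subseteq> prodset gmul CP L Ki"
    if \<mu>: "\<mu> \<in> PK TG r gmul ginv Ki" and ne: "msupp \<mu> \<inter> L \<noteq> {}" and KiG: "Ki \<subseteq> topspace TG" for \<mu> L Ki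
  proof
    fix \<eta> assume e: "\<eta> \<in> msupp \<mu>"
    obtain \<gamma> where g: "\<gamma> \<in> msupp \<mu>" "\<gamma> \<in> L" using ne by blast
    have G: "msupp \<mu> \<subseteq> topspace TG" by (rule PK_D(2)[OF \<mu>])
    have pr: "r \<gamma> = r \<eta>" "gmul (ginv \<gamma>) \<eta> \<in> Ki"
      by (rule PK_D(5)[OF \<mu> g(1) e], rule PK_D(6)[OF \<mu> g(1) e])
    have gG: "\<gamma> \<in> topspace TG" and eG: "\<eta> \<in> topspace TG" using G e g by auto
    have "\<eta> = gmul \<gamma> (gmul (ginv \<gamma>) \<eta>)" using cancel[OF gG eG] pr by simp
    moreover have "(\<gamma>, gmul (ginv \<gamma>) \<eta>) \<in> (L \<times> Ki) \<inter> CP"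
      using g pr gG eG KiG by (auto simp: CP_def composable_def)
    ultimately show "\<eta> \<in> prodset gmul CP L Ki" unfolding prodset_def by force
  qed
  have PK1: "z \<in> topspace TZ \<Longrightarrow> \<phi>1 z \<in> PK TG r gmul ginv K1" for z by (rule PK_of_cont[OF c1])
  have PK2: "z \<in> topspace TZ \<Longrightarrow> \<phi>2 z \<in> PK TG r gmul ginv K2" for z by (rule PK_of_cont[OF c2])
  have CsubZ: "C \<subseteq> topspace TZ" using C compactin_subset_topspace by blast
  have suppC: "msupp (\<phi>1 c) \<union> msupp (\<phi>2 c) \<subseteq> A" if c: "c \<in> C" for c
    using suppA[OF PK1 L1(2)[rule_format, OF c] K1G] suppA[OF PK2 L2(2)[rule_format, OF c] K2G] c CsubZ
    unfolding A_def by blast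
  have msupp_tr: "msupp (translate TG r gmul ginv g \<mu>) = {\<eta> \<in> topspace TG. r \<eta> = r g \<and> gmul (ginv g) \<eta> \<in> msupp \<mu>}" for g \<mu>
    by (auto simp: msupp_def translate_def split: if_splits)
  define \<Psi> where "\<Psi> z = msupp (\<phi>1 z) \<union> msupp (\<phi>2 z)" for z
  have cross: "r \<gamma>1 = r \<gamma>2 \<and> gmul (ginv \<gamma>1) \<gamma>2 \<in> prodset gmul CP (ginv ` A) A"
    if z: "z \<in> topspace TZ" and g1: "\<gamma>1 \<in> \<Psi> z" and g2: "\<gamma>2 \<in> \<Psi> z" for z \<gamma>1 \<gamma>2
  proof -
    obtain g c where zc: "z = act g c" and c: "c \<in> C" and gc: "(g, c) \<in> action_domain TG s TZ p"
      using z CZ by blast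
    have gG: "g \<in> topspace TG" using gc by (simp add: action_domain_def)
    have "\<Psi> z = msupp (translate TG r gmul ginv g (\<phi>1 c)) \<union> msupp (translate TG r gmul ginv g (\<phi>2 c))"
      unfolding \<Psi>_def zc using eq1 eq2 gc by auto
    also have "\<dots> \<subseteq> {\<eta> \<in> topspace TG. r \<eta> = r g \<and> gmul (ginv g) \<eta> \<in> A}"
      unfolding msupp_tr using suppC[OF c] by blast
    finally have sub: "\<Psi> z \<subseteq> {\<eta> \<in> topspace TG. r \<eta> = r g \<and> gmul (ginv g) \<eta> \<in> A}" .
    have e1: "\<gamma>1 \<in> topspace TG" "r \<gamma>1 = r g" "gmul (ginv g) \<gamma>1 \<in> A" using sub g1 by auto
    have e2: "\<gamma>2 \<in> topspace TG" "r \<gamma>2 = r g" "gmul (ginv g) \<gamma>2 \<in> A" using sub g2 by auto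
    have key: "gmul (ginv (gmul (ginv g) \<gamma>1)) (gmul (ginv g) \<gamma>2) = gmul (ginv \<gamma>1) \<gamma>2"
      by (rule translate_key[OF gG e1(1) e2(1) e1(2) e2(2)])
    have "(ginv (gmul (ginv g) \<gamma>1), gmul (ginv g) \<gamma>2) \<in> (ginv ` A \<times> A) \<inter> CP"
      using e1 e2 gG by (auto simp: CP_def composable_def)
    then have "gmul (ginv \<gamma>1) \<gamma>2 \<in> prodset gmul CP (ginv ` A) A"
      unfolding prodset_def key[symmetric] by force
    then show ?thesis using e1 e2 by simp
  qed
  have finPsi: "finite (\<Psi> z)" and PsiG: "\<Psi> z \<subseteq> topspace TG" if "z \<in> topspace TZ" for z
    using PK_D(1,2)[OF PK1[OF that]] PK_D(1,2)[OF PK2[OF that]] unfolding \<Psi>_def by auto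
  have nn1: "\<And>\<gamma>. 0 \<le> \<phi>1 z \<gamma>" and nn2: "\<And>\<gamma>. 0 \<le> \<phi>2 z \<gamma>" if "z \<in> topspace TZ" for z
    using PK_D(3)[OF PK1[OF that]] PK_D(3)[OF PK2[OF that]] by auto
  have sum1: "sum (\<phi>1 z) (\<Psi> z) = 1" and sum2: "sum (\<phi>2 z) (\<Psi> z) = 1" if z: "z \<in> topspace TZ" for z
  proof -
    have "sum (\<phi>1 z) (msupp (\<phi>1 z)) = sum (\<phi>1 z) (\<Psi> z)"
      by (rule sum.mono_neutral_left[OF finPsi[OF z]]) (auto simp: \<Psi>_def msupp_def)
    then show "sum (\<phi>1 z) (\<Psi> z) = 1" using PK_D(4)[OF PK1[OF z]] by simp
    have "sum (\<phi>2 z) (msupp (\<phi>2 z)) = sum (\<phi>2 z) (\<Psi> z)"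
      by (rule sum.mono_neutral_left[OF finPsi[OF z]]) (auto simp: \<Psi>_def msupp_def)
    then show "sum (\<phi>2 z) (\<Psi> z) = 1" using PK_D(4)[OF PK2[OF z]] by simp
  qed
  have pairPsi: "pairing \<mu> f = (\<Sum>\<gamma>\<in>T. \<mu> \<gamma> * f \<gamma>)" if "finite T" "msupp \<mu> \<subseteq> T" for \<mu> f T
    unfolding pairing_def
    by (rule sum.mono_neutral_left[OF that]) (auto simp: msupp_def)
  define H where "H t z = (\<lambda>\<gamma>. (1 - t) * \<phi>1 z \<gamma> + t * \<phi>2 z \<gamma>)" for t :: real and z
  have HsubPsi: "msupp (H t z) \<subseteq> \<Psi> z" for t z
    by (auto simp: msupp_def H_def \<Psi>_def)
  have HPK: "H t z \<in> PK TG r gmul ginv K" if t: "t \<in> {0..1}" and z: "z \<in> topspace TZ" for t z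
  proof -
    have "finite (msupp (H t z))" using finite_subset[OF HsubPsi finPsi[OF z]] .
    moreover have "msupp (H t z) \<subseteq> topspace TG" using HsubPsi PsiG[OF z] by blast
    moreover have "\<forall>\<gamma>. 0 \<le> H t z \<gamma>" using t nn1[OF z] nn2[OF z] by (auto simp: H_def)
    moreover have "sum (H t z) (msupp (H t z)) = 1"
    proof -
      have "sum (H t z) (msupp (H t z)) = sum (H t z) (\<Psi> z)"
        by (rule sum.mono_neutral_left[OF finPsi[OF z] HsubPsi]) (auto simp: msupp_def)
      also have "\<dots> = (1 - t) * sum (\<phi>1 z) (\<Psi> z) + t * sum (\<phi>2 z) (\<Psi> z)"
        by (simp add: H_def sum.distrib sum_distrib_left)
      finally show ?thesis using sum1[OF z] sum2[OF z] by simp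
    qed
    moreover have "\<forall>\<gamma>1\<in>msupp (H t z). \<forall>\<gamma>2\<in>msupp (H t z). r \<gamma>1 = r \<gamma>2 \<and> gmul (ginv \<gamma>1) \<gamma>2 \<in> K"
      using cross[OF z] HsubPsi unfolding K_def by blast
    ultimately show ?thesis unfolding PK_def mem_Collect_eq by (intro conjI)
  qed
  have cont: "continuous_map (prod_topology (top_of_set {0..1::real}) TZ) (PK_top TG r gmul ginv K) (\<lambda>(t, z). H t z)"
    unfolding PK_top_def
  proof (rule continuous_map_pullback')
    show "topspace (prod_topology (top_of_set {0..1::real}) TZ) \<subseteq> (\<lambda>(t, z). H t z) -` PK TG r gmul ginv K"
      using HPK by auto
    show "continuous_map (prod_topology (top_of_set {0..1::real}) TZ) (product_topology (\<lambda>_. euclideanreal) (Cc TG))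
       ((\<lambda>\<mu>. restrict (pairing \<mu>) (Cc TG)) \<circ> (\<lambda>(t, z). H t z))"
      unfolding continuous_map_componentwise
    proof (intro conjI ballI)
      show "((\<lambda>\<mu>. restrict (pairing \<mu>) (Cc TG)) \<circ> (\<lambda>(t, z). H t z)) ` topspace (prod_topology (top_of_set {0..1::real}) TZ) \<subseteq> extensional (Cc TG)"
        by auto
      fix f assume f: "f \<in> Cc TG"
      have cf1: "continuous_map TZ euclideanreal (\<lambda>z. pairing (\<phi>1 z) f)" by (rule pairing_cont[OF c1 f])
      have cf2: "continuous_map TZ euclideanreal (\<lambda>z. pairing (\<phi>2 z) f)" by (rule pairing_cont[OF c2 f])
      have ct: "continuous_map (prod_topology (top_of_set {0..1::real}) TZ) euclideanreal fst"
        using continuous_map_fst continuous_map_into_fulltopology by blast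
      have cs1: "continuous_map (prod_topology (top_of_set {0..1::real}) TZ) euclideanreal (\<lambda>x. pairing (\<phi>1 (snd x)) f)"
        using continuous_map_compose[OF continuous_map_snd cf1] by (simp add: o_def)
      have cs2: "continuous_map (prod_topology (top_of_set {0..1::real}) TZ) euclideanreal (\<lambda>x. pairing (\<phi>2 (snd x)) f)"
        using continuous_map_compose[OF continuous_map_snd cf2] by (simp add: o_def)
      have cc: "continuous_map (prod_topology (top_of_set {0..1::real}) TZ) euclideanreal
          (\<lambda>x. (1 - fst x) * pairing (\<phi>1 (snd x)) f + fst x * pairing (\<phi>2 (snd x)) f)"
        by (intro continuous_map_add continuous_map_real_mult continuous_map_diff ct cs1 cs2 continuous_map_const[THEN iffD2]) simp
      show "continuous_map (prod_topology (top_of_set {0..1::real}) TZ) euclideanreal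
          (\<lambda>x. ((\<lambda>\<mu>. restrict (pairing \<mu>) (Cc TG)) \<circ> (\<lambda>(t, z). H t z)) x f)"
      proof (rule continuous_map_eq[OF cc])
        fix x assume x: "x \<in> topspace (prod_topology (top_of_set {0..1::real}) TZ)"
        obtain t :: real and z where xt: "x = (t, z)" and z: "z \<in> topspace TZ" using x by auto
        have s1: "msupp (\<phi>1 z) \<subseteq> \<Psi> z" and s2: "msupp (\<phi>2 z) \<subseteq> \<Psi> z" by (auto simp: \<Psi>_def)
        have "pairing (H t z) f = (\<Sum>\<gamma>\<in>\<Psi> z. H t z \<gamma> * f \<gamma>)" by (rule pairPsi[OF finPsi[OF z] HsubPsi])
        also have "\<dots> = (1 - t) * (\<Sum>\<gamma>\<in>\<Psi> z. \<phi>1 z \<gamma> * f \<gamma>) + t * (\<Sum>\<gamma>\<in>\<Psi> z. \<phi>2 z \<gamma> * f \<gamma>)"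
        proof -
          have "(\<Sum>\<gamma>\<in>\<Psi> z. H t z \<gamma> * f \<gamma>) = (\<Sum>\<gamma>\<in>\<Psi> z. (1 - t) * (\<phi>1 z \<gamma> * f \<gamma>) + t * (\<phi>2 z \<gamma> * f \<gamma>))"
            by (rule sum.cong) (simp_all add: H_def algebra_simps)
          also have "\<dots> = (1 - t) * (\<Sum>\<gamma>\<in>\<Psi> z. \<phi>1 z \<gamma> * f \<gamma>) + t * (\<Sum>\<gamma>\<in>\<Psi> z. \<phi>2 z \<gamma> * f \<gamma>)"
            by (simp add: sum.distrib sum_distrib_left)
          finally show ?thesis .
        qed
        also have "\<dots> = (1 - t) * pairing (\<phi>1 z) f + t * pairing (\<phi>2 z) f"
          using pairPsi[OF finPsi[OF z] s1] pairPsi[OF finPsi[OF z] s2] by simp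
        finally show "(1 - fst x) * pairing (\<phi>1 (snd x)) f + fst x * pairing (\<phi>2 (snd x)) f =
            ((\<lambda>\<mu>. restrict (pairing \<mu>) (Cc TG)) \<circ> (\<lambda>(t, z). H t z)) x f"
          using f xt by simp
      qed
    qed
  qed
  have equiv: "\<forall>t\<in>{0..1}. \<forall>(g, z)\<in>action_domain TG s TZ p. H t (act g z) = translate TG r gmul ginv g (H t z)"
  proof (intro ballI)
    fix t x assume x: "x \<in> action_domain TG s TZ p"
    obtain g z where xg: "x = (g, z)" by (cases x)
    have e1: "\<phi>1 (act g z) = translate TG r gmul ginv g (\<phi>1 z)" using eq1 x xg by auto
    have e2: "\<phi>2 (act g z) = translate TG r gmul ginv g (\<phi>2 z)" using eq2 x xg by auto
    show "case x of (g, z) \<Rightarrow> H t (act g z) = translate TG r gmul ginv g (H t z)"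
      unfolding xg by (simp add: H_def e1 e2 translate_def fun_eq_iff)
  qed
  have ends: "\<forall>z\<in>topspace TZ. H 0 z = iota (\<phi>1 z) \<and> H 1 z = iota (\<phi>2 z)"
    by (simp add: H_def iota_def)
  have "K1 \<union> K2 \<subseteq> K" unfolding K_def by blast
  then show ?thesis using cK cont equiv ends by blast
qed

end
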